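(* Let $(\Delta,G)$ be a stable admissible pair such that $\Delta$ is mutation-finite. Then the quotient $\Delta/G$ is mutation-finite.
   Context: Here $\Delta$ is identified with a skew-symmetrizable matrix $A=(a_{ij})\in M_{Q_0}(\mathbb Z)$, $Q_0$ finite ($DA$ skew-symmetric for a positive integer diagonal $D$). Mutation $\mu_k(B)=(b'_{ij})$: $b'_{ij}=-b_{ij}$ if $k\in\{i,j\}$, else $b_{ij}+\tfrac12(|b_{ik}|b_{kj}+b_{ik}|b_{kj}|)$; $B$ is mutation-finite if the set $\mathrm{Mut}(B)$ of matrices obtained from $B$ by finite sequences of mutations is finite. A permutation $g$ of $Q_0$ is an automorphism of $B$ if $b_{gi,gj}=b_{ij}$; a group $G$ of automorphisms is admissible ($(B,G)$ an admissible pair) if for distinct $i,j$ in the same orbit there is no path of length $1$ or $2$ from $i$ to $j$ in the quiver of $B$ ($b_{ij}\le0$ and no $k$ with $b_{ik}>0$, $b_{kj}>0$). With $\overline Q_0$ the set of orbits, $A/G\in M_{\overline Q_0}(\mathbb Z)$ has entries $(A/G)_{\mathbf i,\mathbf j}=\sum_{k\in\mathbf i}a_{k,j}$ ($j\in\mathbf j$). Orbit mutation $\mu^G_{\mathbf i}=\prod_{j\in\mathbf i}\mu_j$; $(A,G)$ is stable if for every finite sequence of orbits all pairs $(\mu^G_{\mathbf i_m}\circ\cdots\circ\mu^G_{\mathbf i_1}(A),G)$ are admissible. *)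

theory Defs
  imports Main
begin

type_synonym 'a emat = "'a \<Rightarrow> 'a \<Rightarrow> int"

definition skew_symmetrizable :: "'a emat \<Rightarrow> bool" where
  "skew_symmetrizable A \<longleftrightarrow>
     (\<exists>D :: 'a \<Rightarrow> int. (\<forall>i. D i > 0) \<and> (\<forall>i j. D i * A i j = - (D j * A j i)))"

text \<open>Matrix mutation at k. The quantity |b_ik| b_kj + b_ik |b_kj| is always even.\<close>
definition mut :: "'a \<Rightarrow> 'a emat \<Rightarrow> 'a emat" where
  "mut k B = (\<lambda>i j. if i = k \<or> j = k then - B i j
                    else B i j + (\<bar>B i k\<bar> * B k j + B i k * \<bar>B k j\<bar>) div 2)"

definition Mut_on :: "'a set \<Rightarrow> 'a emat \<Rightarrow> 'a emat set" where
  "Mut_on C B = {fold mut ks B | ks. set ks \<subseteq> C}"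

definition mutation_finite_on :: "'a set \<Rightarrow> 'a emat \<Rightarrow> bool" where
  "mutation_finite_on C B \<longleftrightarrow> finite (Mut_on C B)"

abbreviation mutation_finite :: "'a emat \<Rightarrow> bool" where
  "mutation_finite B \<equiv> mutation_finite_on UNIV B"

definition perm_group :: "('a \<Rightarrow> 'a) set \<Rightarrow> bool" where
  "perm_group G \<longleftrightarrow> id \<in> G \<and> (\<forall>g\<in>G. bij g \<and> inv g \<in> G) \<and> (\<forall>g\<in>G. \<forall>h\<in>G. g \<circ> h \<in> G)"

definition is_automorphism :: "'a emat \<Rightarrow> ('a \<Rightarrow> 'a) \<Rightarrow> bool" where
  "is_automorphism B g \<longleftrightarrow> bij g \<and> (\<forall>i j. B (g i) (g j) = B i j)"

definition orbit :: "('a \<Rightarrow> 'a) set \<Rightarrow> 'a \<Rightarrow> 'a set" where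
  "orbit G i = {g i | g. g \<in> G}"

definition orbits :: "('a \<Rightarrow> 'a) set \<Rightarrow> 'a set set" where
  "orbits G = range (orbit G)"

definition admissible :: "'a emat \<Rightarrow> ('a \<Rightarrow> 'a) set \<Rightarrow> bool" where
  "admissible B G \<longleftrightarrow> perm_group G \<and> (\<forall>g\<in>G. is_automorphism B g) \<and>
     (\<forall>i j. j \<in> orbit G i \<and> i \<noteq> j \<longrightarrow> B i j \<le> 0 \<and> \<not> (\<exists>k. B i k > 0 \<and> B k j > 0))"

definition quotient :: "'a emat \<Rightarrow> ('a \<Rightarrow> 'a) set \<Rightarrow> 'a set emat" where
  "quotient A G = (\<lambda>I J. if I \<in> orbits G \<and> J \<in> orbits G
                          then (\<Sum>k\<in>I. A k (SOME j. j \<in> J)) else 0)"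

text \<open>Orbit mutation: product of the mutations at all vertices of the orbit
  (performed in increasing order; the order is irrelevant for admissible pairs).\<close>
definition orbit_mut :: "'a::linorder set \<Rightarrow> 'a emat \<Rightarrow> 'a emat" where
  "orbit_mut I B = fold mut (sorted_list_of_set I) B"

definition stable :: "'a::linorder emat \<Rightarrow> ('a \<Rightarrow> 'a) set \<Rightarrow> bool" where
  "stable A G \<longleftrightarrow> (\<forall>Is. set Is \<subseteq> orbits G \<longrightarrow> admissible (fold orbit_mut Is A) G)"

end

theory Submission
  imports Defs
begin

definition tt :: "int \<Rightarrow> int \<Rightarrow> int" where
  "tt a c = (\<bar>a\<bar> * c + a * \<bar>c\<bar>) div 2"

lemma mut_tt: "mut k B = (\<lambda>i j. if i = k \<or> j = k then - B i j else B i j + tt (B i k) (B k j))"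
  unfolding mut_def tt_def by simp

lemma tt2: "2 * tt a c = \<bar>a\<bar> * c + a * \<bar>c\<bar>"
proof -
  have "even (\<bar>a\<bar> * c + a * \<bar>c\<bar>)"
    by (cases "a \<ge> 0"; cases "c \<ge> 0") (auto simp: abs_if)
  then show ?thesis unfolding tt_def by simp
qed

lemma tt0 [simp]: "tt 0 c = 0" "tt a 0 = 0" unfolding tt_def by simp_all

lemma sgn_opp: "(a::int) > 0 \<Longrightarrow> b > 0 \<Longrightarrow> a*x = -(b*y) \<Longrightarrow> (x > 0 \<longleftrightarrow> y < 0) \<and> (x < 0 \<longleftrightarrow> y > 0)"
  by (metis mult_less_0_iff neg_0_less_iff_less zero_less_mult_iff neg_less_0_iff_less order_less_asym)
lemma key_skew: fixes Di Dj Dk bik bki bkj bjk :: int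
  assumes "Di > 0" "Dj > 0" "Dk > 0" "Di * bik = - (Dk * bki)" "Dk * bkj = - (Dj * bjk)"
  shows "Di * (\<bar>bik\<bar>*bkj + bik*\<bar>bkj\<bar>) = - (Dj * (\<bar>bjk\<bar>*bki + bjk*\<bar>bki\<bar>))"
proof -
  have s1: "bik > 0 \<longleftrightarrow> bki < 0" "bik < 0 \<longleftrightarrow> bki > 0" using sgn_opp[OF assms(1,3,4)] by auto
  have s2: "bkj > 0 \<longleftrightarrow> bjk < 0" "bkj < 0 \<longleftrightarrow> bjk > 0" using sgn_opp[OF assms(3,2,5)] by auto
  have m: "Di * bik * bkj = Dj * bjk * bki"
  proof -
    have "Di * bik * bkj = - (Dk * bki) * bkj" using assms(4) by simp
    also have "\<dots> = - bki * (Dk * bkj)" by (simp add: algebra_simps)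
    also have "\<dots> = Dj * bjk * bki" using assms(5) by (simp add: algebra_simps)
    finally show ?thesis .
  qed
  show ?thesis
  proof (cases "bik" rule: linorder_cases[of _ 0]; cases "bkj" rule: linorder_cases[of _ 0])
    assume "bik < 0" "bkj < 0"
    then have "bki > 0" "bjk > 0" using s1 s2 by auto
    then show ?thesis using `bik < 0` `bkj < 0` m by (simp add: algebra_simps)
  next
    assume "bik > 0" "bkj > 0"
    then have "bki < 0" "bjk < 0" using s1 s2 by auto
    then show ?thesis using `bik > 0` `bkj > 0` m by (simp add: algebra_simps)
  next
    assume "bik < 0" "bkj > 0"
    then have "bki > 0" "bjk < 0" using s1 s2 by auto
    then show ?thesis using `bik < 0` `bkj > 0` by (simp add: algebra_simps)
  next
    assume "bik > 0" "bkj < 0"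
    then have "bki < 0" "bjk > 0" using s1 s2 by auto
    then show ?thesis using `bik > 0` `bkj < 0` by (simp add: algebra_simps)
  qed (use s1 s2 in auto)
qed

lemma skew_mut:
  assumes "skew_symmetrizable B" shows "skew_symmetrizable (mut k B)"
proof -
  obtain D :: "'a \<Rightarrow> int" where Dp: "\<forall>i. D i > 0" and Ds: "\<forall>i j. D i * B i j = - (D j * B j i)"
    using assms unfolding skew_symmetrizable_def by blast
  have key: "D i * tt (B i k) (B k j) = - (D j * tt (B j k) (B k i))" for i j
  proof -
    have h: "D i * (2 * tt (B i k) (B k j)) = - (D j * (2 * tt (B j k) (B k i)))"
      unfolding tt2
      by (rule key_skew[OF spec[OF Dp] spec[OF Dp] spec[OF Dp] spec[OF spec[OF Ds]] spec[OF spec[OF Ds]]])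
    have "2 * (D i * tt (B i k) (B k j)) = D i * (2 * tt (B i k) (B k j))" by (rule mult.left_commute)
    moreover have "2 * (D j * tt (B j k) (B k i)) = D j * (2 * tt (B j k) (B k i))" by (rule mult.left_commute)
    ultimately show ?thesis using h by linarith
  qed
  show ?thesis unfolding skew_symmetrizable_def
  proof (intro exI[of _ D] conjI allI)
    fix i j show "D i > 0" using Dp by auto
    show "D i * mut k B i j = - (D j * mut k B j i)"
    proof (cases "i = k \<or> j = k")
      case True
      have e: "D i * B i j = - (D j * B j i)" using Ds by blast
      have "mut k B i j = - B i j" "mut k B j i = - B j i" using True by (auto simp: mut_tt)
      then show ?thesis using e by simp
    next
      case False
      have "D i * mut k B i j = D i * B i j + D i * tt (B i k) (B k j)"
        using False by (simp add: mut_tt algebra_simps)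
      also have "\<dots> = - (D j * B j i) - D j * tt (B j k) (B k i)"
        using spec[OF spec[OF Ds, of i], of j] key[of i j] by simp
      also have "\<dots> = - (D j * mut k B j i)"
        using False by (simp add: mut_tt algebra_simps)
      finally show ?thesis .
    qed
  qed
qed

lemma skew_fold_mut: "skew_symmetrizable B \<Longrightarrow> skew_symmetrizable (fold mut ks B)"
  by (induction ks arbitrary: B) (auto simp: skew_mut)

lemma fold_mut_indep:
  assumes "distinct ks" "\<forall>i\<in>set ks. \<forall>i'\<in>set ks. i \<noteq> i' \<longrightarrow> B i i' = 0"
  shows "fold mut ks B x y = (if x \<in> set ks \<or> y \<in> set ks then - B x y
           else B x y + (\<Sum>i\<in>set ks. tt (B x i) (B i y)))"
  using assms
proof (induction ks arbitrary: B)
  case Nil then show ?case by simp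
next
  case (Cons k ks)
  define B1 where "B1 = mut k B"
  have kn: "k \<notin> set ks" using Cons by simp
  have z: "B i k = 0" "B k i = 0" if "i \<in> set ks" for i
    using Cons.prems that kn by fastforce+
  have h: "\<forall>i\<in>set ks. \<forall>i'\<in>set ks. i \<noteq> i' \<longrightarrow> B1 i i' = 0"
    using Cons.prems kn z unfolding B1_def mut_tt by fastforce
  have IH: "fold mut ks B1 x y = (if x \<in> set ks \<or> y \<in> set ks then - B1 x y
           else B1 x y + (\<Sum>i\<in>set ks. tt (B1 x i) (B1 i y)))"
    using Cons.IH[OF _ h] Cons.prems by simp
  have fk: "fold mut (k # ks) B x y = fold mut ks B1 x y" by (simp add: B1_def)
  show ?case
  proof (cases "x \<in> set ks \<or> y \<in> set ks")
    case True
    then show ?thesis unfolding fk IH using z kn by (auto simp: B1_def mut_tt)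
  next
    case False
    show ?thesis
    proof (cases "x = k \<or> y = k")
      case True
      have "(\<Sum>i\<in>set ks. tt (B1 x i) (B1 i y)) = 0"
        using True False kn z by (auto simp: B1_def mut_tt intro!: sum.neutral)
      then show ?thesis unfolding fk IH using True False by (auto simp: B1_def mut_tt)
    next
      case F2: False
      have "(\<Sum>i\<in>set ks. tt (B1 x i) (B1 i y)) = (\<Sum>i\<in>set ks. tt (B x i) (B i y))"
        apply (rule sum.cong[OF refl])
        using F2 kn z by (auto simp: B1_def mut_tt)
      then show ?thesis unfolding fk IH using False F2 kn
        by (simp add: B1_def mut_tt)
    qed
  qed
qed

context
  fixes G :: "('a \<Rightarrow> 'a) set"
  assumes pg: "perm_group G"
begin

lemma orbit_refl: "i \<in> orbit G i"
  using pg unfolding perm_group_def orbit_def by (metis (mono_tags, lifting) id_apply mem_Collect_eq)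

lemma orbit_sym: "j \<in> orbit G i \<Longrightarrow> i \<in> orbit G j"
proof -
  assume "j \<in> orbit G i"
  then obtain g where g: "g \<in> G" "j = g i" unfolding orbit_def by blast
  then have "bij g" "inv g \<in> G" using pg unfolding perm_group_def by auto
  then have "inv g j = i" using g by (simp add: bij_is_inj)
  then show ?thesis unfolding orbit_def using \<open>inv g \<in> G\<close> by blast
qed

lemma orbit_trans: "j \<in> orbit G i \<Longrightarrow> k \<in> orbit G j \<Longrightarrow> k \<in> orbit G i"
proof -
  assume "j \<in> orbit G i" "k \<in> orbit G j"
  then obtain g h where "g \<in> G" "j = g i" "h \<in> G" "k = h j" unfolding orbit_def by blast
  then have "h \<circ> g \<in> G" "k = (h \<circ> g) i" using pg unfolding perm_group_def by auto
  then show ?thesis unfolding orbit_def by blast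
qed

lemma orbit_eq: "j \<in> orbit G i \<Longrightarrow> orbit G j = orbit G i"
  using orbit_trans orbit_sym by blast

lemma orbits_eq: "I \<in> orbits G \<Longrightarrow> x \<in> I \<Longrightarrow> I = orbit G x"
  unfolding orbits_def using orbit_eq by auto

lemma orbits_ne: "I \<in> orbits G \<Longrightarrow> I \<noteq> {}"
  unfolding orbits_def using orbit_refl by auto

lemma orbits_disj: "I \<in> orbits G \<Longrightarrow> J \<in> orbits G \<Longrightarrow> I \<noteq> J \<Longrightarrow> x \<in> I \<Longrightarrow> x \<notin> J"
  using orbits_eq by metis

lemma orbits_same: "I \<in> orbits G \<Longrightarrow> i \<in> I \<Longrightarrow> i' \<in> I \<Longrightarrow> i' \<in> orbit G i"
  using orbits_eq by blast

lemma orbit_bij: assumes "g \<in> G" "J \<in> orbits G" shows "bij_betw g J J"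
proof -
  have bg: "bij g" using pg assms unfolding perm_group_def by auto
  have "g ` J \<subseteq> J"
  proof
    fix y assume "y \<in> g ` J"
    then obtain x where "x \<in> J" "y = g x" by blast
    then show "y \<in> J" using orbits_eq[OF assms(2) \<open>x \<in> J\<close>] assms(1) orbit_trans
      unfolding orbit_def by blast
  qed
  moreover have "J \<subseteq> g ` J"
  proof
    fix y assume y: "y \<in> J"
    have ig: "inv g \<in> G" using pg assms unfolding perm_group_def by auto
    have "inv g y \<in> J" using orbits_eq[OF assms(2) y] ig orbit_trans
      unfolding orbit_def by blast
    moreover have "g (inv g y) = y" using bg by (simp add: bij_is_surj surj_f_inv_f)
    ultimately show "y \<in> g ` J" by (metis imageI)
  qed
  moreover have "inj_on g J" using bg bij_is_inj inj_on_subset subset_UNIV by metis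
  ultimately show ?thesis unfolding bij_betw_def by blast
qed

end

lemma abs_sum_uniform:
  fixes c :: "'b \<Rightarrow> int"
  assumes "\<forall>i\<in>I. \<forall>i'\<in>I. \<not> (c i > 0 \<and> c i' < 0)"
  shows "\<bar>sum c I\<bar> = (\<Sum>i\<in>I. \<bar>c i\<bar>)"
proof (cases "\<forall>i\<in>I. c i \<ge> 0")
  case True then show ?thesis by (simp add: sum_nonneg)
next
  case False
  then have "\<forall>i\<in>I. c i \<le> 0" using assms by force
  then have "\<bar>sum c I\<bar> = - sum c I" "(\<Sum>i\<in>I. \<bar>c i\<bar>) = (\<Sum>i\<in>I. - c i)"
    by (auto simp: sum_nonpos intro!: sum.cong)
  then show ?thesis by (simp add: sum_negf)
qed

lemma sum_tt:
  fixes a :: "'b \<Rightarrow> 'c \<Rightarrow> int" and c :: "'c \<Rightarrow> int"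
  assumes fin: "finite I" and ne: "i0 \<in> I"
    and col: "\<forall>i\<in>I. (\<Sum>x\<in>J. a x i) = (\<Sum>x\<in>J. a x i0)"
    and sa: "\<forall>x\<in>J. \<forall>x'\<in>J. \<forall>i\<in>I. \<forall>i'\<in>I. \<not> (a x i < 0 \<and> a x' i' > 0)"
    and sc: "\<forall>i\<in>I. \<forall>i'\<in>I. \<not> (c i > 0 \<and> c i' < 0)"
  shows "(\<Sum>x\<in>J. \<Sum>i\<in>I. tt (a x i) (c i)) = tt (\<Sum>x\<in>J. a x i0) (sum c I)"
proof -
  define \<alpha> where "\<alpha> = (\<Sum>x\<in>J. a x i0)"
  have ac: "\<bar>sum c I\<bar> = (\<Sum>i\<in>I. \<bar>c i\<bar>)" using abs_sum_uniform[OF sc] .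
  have "2 * (\<Sum>x\<in>J. \<Sum>i\<in>I. tt (a x i) (c i)) = (\<Sum>x\<in>J. \<Sum>i\<in>I. \<bar>a x i\<bar> * c i + a x i * \<bar>c i\<bar>)"
    by (simp add: sum_distrib_left tt2)
  also have "\<dots> = 2 * tt \<alpha> (sum c I)"
  proof (cases "\<forall>x\<in>J. \<forall>i\<in>I. a x i \<ge> 0")
    case True
    have al: "\<alpha> \<ge> 0" unfolding \<alpha>_def using True ne by (simp add: sum_nonneg)
    have "(\<Sum>x\<in>J. \<Sum>i\<in>I. \<bar>a x i\<bar> * c i + a x i * \<bar>c i\<bar>) = (\<Sum>x\<in>J. \<Sum>i\<in>I. a x i * (c i + \<bar>c i\<bar>))"
      using True by (auto intro!: sum.cong simp: algebra_simps)
    also have "\<dots> = (\<Sum>i\<in>I. (\<Sum>x\<in>J. a x i) * (c i + \<bar>c i\<bar>))"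
      by (subst sum.swap) (simp add: sum_distrib_right)
    also have "\<dots> = (\<Sum>i\<in>I. \<alpha> * (c i + \<bar>c i\<bar>))"
      using col unfolding \<alpha>_def by (auto intro!: sum.cong)
    also have "\<dots> = \<alpha> * sum c I + \<alpha> * \<bar>sum c I\<bar>"
      unfolding ac by (simp add: sum_distrib_left sum.distrib algebra_simps)
    also have "\<dots> = 2 * tt \<alpha> (sum c I)" using al by (simp add: tt2 algebra_simps)
    finally show ?thesis .
  next
    case False
    then have F: "\<forall>x\<in>J. \<forall>i\<in>I. a x i \<le> 0" using sa by force
    have al: "\<alpha> \<le> 0" unfolding \<alpha>_def using F ne by (simp add: sum_nonpos)
    have "(\<Sum>x\<in>J. \<Sum>i\<in>I. \<bar>a x i\<bar> * c i + a x i * \<bar>c i\<bar>) = (\<Sum>x\<in>J. \<Sum>i\<in>I. a x i * (\<bar>c i\<bar> - c i))"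
      using F by (auto intro!: sum.cong simp: algebra_simps)
    also have "\<dots> = (\<Sum>i\<in>I. (\<Sum>x\<in>J. a x i) * (\<bar>c i\<bar> - c i))"
      by (subst sum.swap) (simp add: sum_distrib_right)
    also have "\<dots> = (\<Sum>i\<in>I. \<alpha> * (\<bar>c i\<bar> - c i))"
      using col unfolding \<alpha>_def by (auto intro!: sum.cong)
    also have "\<dots> = \<alpha> * \<bar>sum c I\<bar> - \<alpha> * sum c I"
      unfolding ac by (simp add: sum_distrib_left sum_subtractf algebra_simps)
    also have "\<dots> = 2 * tt \<alpha> (sum c I)" using al by (simp add: tt2 algebra_simps)
    finally show ?thesis .
  qed
  finally show ?thesis unfolding \<alpha>_def by simp
qed


lemma fold_orbit_mut_concat:
  "fold orbit_mut Is B = fold mut (concat (map sorted_list_of_set Is)) B"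
  by (induction Is arbitrary: B) (auto simp: orbit_mut_def)

lemma quotient_orbit_mut:
  fixes B :: "'a::{finite,linorder} emat"
  assumes adm: "admissible B G" and sk: "skew_symmetrizable B" and IG: "I \<in> orbits G"
  shows "quotient (orbit_mut I B) G = mut I (quotient B G)"
proof -
  have pg: "perm_group G" using adm unfolding admissible_def by simp
  obtain D :: "'a \<Rightarrow> int" where Dp: "\<forall>i. D i > 0" and Ds: "\<forall>i j. D i * B i j = - (D j * B j i)"
    using sk unfolding skew_symmetrizable_def by blast
  have aut: "\<And>g i j. g \<in> G \<Longrightarrow> B (g i) (g j) = B i j"
    using adm unfolding admissible_def is_automorphism_def by blast
  have adm2: "\<And>i j k. j \<in> orbit G i \<Longrightarrow> i \<noteq> j \<Longrightarrow> B i j \<le> 0 \<and> \<not> (B i k > 0 \<and> B k j > 0)"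
    using adm unfolding admissible_def by blast
  have opp: "(B i j > 0 \<longleftrightarrow> B j i < 0) \<and> (B i j < 0 \<longleftrightarrow> B j i > 0)" for i j
    using sgn_opp[of "D i" "D j" "B i j" "B j i", OF spec[OF Dp] spec[OF Dp] spec[OF spec[OF Ds]]] by blast
  have zero: "B i i' = 0" if "i \<in> I" "i' \<in> I" "i \<noteq> i'" for i i'
  proof -
    have "B i i' \<le> 0" using adm2 orbits_same[OF pg IG that(1,2)] that(3) by blast
    moreover have "B i' i \<le> 0" using adm2 orbits_same[OF pg IG that(2,1)] that(3) by metis
    ultimately show ?thesis using opp[of i i'] by linarith
  qed
  define L where "L = sorted_list_of_set I"
  have L: "distinct L" "set L = I" unfolding L_def by auto
  have om: "orbit_mut I B x y = (if x \<in> I \<or> y \<in> I then - B x y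
           else B x y + (\<Sum>i\<in>I. tt (B x i) (B i y)))" for x y
    using fold_mut_indep[of L B x y] L zero unfolding orbit_mut_def L_def[symmetric] by auto
  have row: "\<not> (B z i < 0 \<and> B z i' > 0)" if "i \<in> I" "i' \<in> I" for z i i'
  proof (cases "i = i'")
    case False
    show ?thesis using adm2[OF orbits_same[OF pg IG that] False, of z] opp[of z i] by auto
  qed auto
  have colu: "\<not> (B i y > 0 \<and> B i' y < 0)" if "i \<in> I" "i' \<in> I" for y i i'
  proof (cases "i = i'")
    case False
    show ?thesis using adm2[OF orbits_same[OF pg IG that] False, of y] opp[of i' y] by auto
  qed auto
  have Ine: "I \<noteq> {}" using orbits_ne[OF pg IG] .
  define i0 where "i0 = (SOME j. j \<in> I)"
  have i0: "i0 \<in> I" unfolding i0_def using Ine by (simp add: some_in_eq)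
  show ?thesis
  proof (intro ext)
    fix J K
    show "quotient (orbit_mut I B) G J K = mut I (quotient B G) J K"
    proof (cases "J \<in> orbits G \<and> K \<in> orbits G")
      case False
      then show ?thesis unfolding quotient_def mut_tt using IG by auto
    next
      case True
      then have JG: "J \<in> orbits G" and KG: "K \<in> orbits G" by auto
      define y where "y = (SOME j. j \<in> K)"
      have y: "y \<in> K" unfolding y_def using orbits_ne[OF pg KG] by (simp add: some_in_eq)
      have qJK: "quotient C G J K = (\<Sum>x\<in>J. C x y)" for C
        unfolding quotient_def y_def using JG KG by simp
      have qJI: "quotient C G J I = (\<Sum>x\<in>J. C x i0)" for C
        unfolding quotient_def i0_def using JG IG by simp
      have qIK: "quotient C G I K = (\<Sum>i\<in>I. C i y)" for C
        unfolding quotient_def y_def using IG KG by simp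
      show ?thesis
      proof (cases "J = I \<or> K = I")
        case True
        then have "x \<in> J \<Longrightarrow> x \<in> I \<or> y \<in> I" for x using y by auto
        then have "quotient (orbit_mut I B) G J K = - quotient B G J K"
          unfolding qJK om by (simp add: sum_negf)
        then show ?thesis using True unfolding mut_tt by simp
      next
        case False
        have xJ: "x \<notin> I" if "x \<in> J" for x using orbits_disj[OF pg JG IG _ that] False by blast
        have yK: "y \<notin> I" using orbits_disj[OF pg KG IG _ y] False by blast
        have lhs: "quotient (orbit_mut I B) G J K
            = (\<Sum>x\<in>J. B x y) + (\<Sum>x\<in>J. \<Sum>i\<in>I. tt (B x i) (B i y))"
          unfolding qJK om using xJ yK by (simp add: sum.distrib)
        have col: "\<forall>i\<in>I. (\<Sum>x\<in>J. B x i) = (\<Sum>x\<in>J. B x i0)"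
        proof
          fix i assume "i \<in> I"
          then have "i \<in> orbit G i0" using orbits_same[OF pg IG i0] by blast
          then obtain g where g: "g \<in> G" "i = g i0" unfolding orbit_def by blast
          have "(\<Sum>x\<in>J. B x i) = (\<Sum>x\<in>J. B (g x) (g i0))"
            using sum.reindex_bij_betw[OF orbit_bij[OF pg g(1) JG], of "\<lambda>x. B x (g i0)"] g(2) by simp
          also have "\<dots> = (\<Sum>x\<in>J. B x i0)" using aut[OF g(1)] by simp
          finally show "(\<Sum>x\<in>J. B x i) = (\<Sum>x\<in>J. B x i0)" .
        qed
        have sa: "\<forall>x\<in>J. \<forall>x'\<in>J. \<forall>i\<in>I. \<forall>i'\<in>I. \<not> (B x i < 0 \<and> B x' i' > 0)"
        proof (intro ballI)
          fix x x' i i' assume xx: "x \<in> J" "x' \<in> J" "i \<in> I" "i' \<in> I"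
          then have "x' \<in> orbit G x" using orbits_same[OF pg JG] by blast
          then obtain g where g: "g \<in> G" "x' = g x" unfolding orbit_def by blast
          have bg: "bij g" "inv g \<in> G" using pg g unfolding perm_group_def by auto
          have "B x' i' = B (inv g x') (inv g i')" using aut[OF bg(2)] by simp
          also have "inv g x' = x" using g bg by (simp add: bij_is_inj)
          finally have e: "B x' i' = B x (inv g i')" .
          have "inv g i' \<in> orbit G i'" using bg(2) unfolding orbit_def by blast
          then have "inv g i' \<in> I" using orbits_eq[OF pg IG xx(4)] by simp
          then show "\<not> (B x i < 0 \<and> B x' i' > 0)" using row[OF xx(3)] e by metis
        qed
        have sc: "\<forall>i\<in>I. \<forall>i'\<in>I. \<not> (B i y > 0 \<and> B i' y < 0)" using colu by blast
        have st: "(\<Sum>x\<in>J. \<Sum>i\<in>I. tt (B x i) (B i y)) = tt (\<Sum>x\<in>J. B x i0) (\<Sum>i\<in>I. B i y)"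
          by (rule sum_tt[OF _ i0 col sa sc]) simp
        have "mut I (quotient B G) J K = quotient B G J K + tt (quotient B G J I) (quotient B G I K)"
          using False unfolding mut_tt by simp
        also have "\<dots> = (\<Sum>x\<in>J. B x y) + tt (\<Sum>x\<in>J. B x i0) (\<Sum>i\<in>I. B i y)"
          unfolding qJK qJI qIK ..
        finally show ?thesis unfolding lhs st by simp
      qed
    qed
  qed
qed

theorem mainTheorem17:
  fixes A :: "'a::{finite,linorder} emat" and G :: "('a \<Rightarrow> 'a) set"
  assumes "skew_symmetrizable A"
    and "admissible A G"
    and "stable A G"
    and "mutation_finite A"
  shows "mutation_finite_on (orbits G) (quotient A G)"
proof -
  have comm: "set Is \<subseteq> orbits G \<Longrightarrow> fold mut Is (quotient A G) = quotient (fold orbit_mut Is A) G" for Is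
  proof (induction Is rule: rev_induct)
    case Nil then show ?case by simp
  next
    case (snoc I Is)
    have adm: "admissible (fold orbit_mut Is A) G" using assms(3) snoc.prems unfolding stable_def by auto
    have sk: "skew_symmetrizable (fold orbit_mut Is A)"
      unfolding fold_orbit_mut_concat using skew_fold_mut[OF assms(1)] .
    have "I \<in> orbits G" using snoc.prems by auto
    then show ?case using snoc quotient_orbit_mut[OF adm sk] by simp
  qed
  have "Mut_on (orbits G) (quotient A G) \<subseteq> (\<lambda>B. quotient B G) ` Mut_on UNIV A"
  proof
    fix Q assume "Q \<in> Mut_on (orbits G) (quotient A G)"
    then obtain Is where Is: "set Is \<subseteq> orbits G" "Q = fold mut Is (quotient A G)"
      unfolding Mut_on_def by blast
    then have "Q = quotient (fold mut (concat (map sorted_list_of_set Is)) A) G"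
      using comm fold_orbit_mut_concat by metis
    then show "Q \<in> (\<lambda>B. quotient B G) ` Mut_on UNIV A" unfolding Mut_on_def by blast
  qed
  moreover have "finite ((\<lambda>B. quotient B G) ` Mut_on UNIV A)"
    using assms(4) unfolding mutation_finite_on_def by simp
  ultimately show ?thesis unfolding mutation_finite_on_def by (rule finite_subset)
qed

end
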